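(* Let $m,k,n\ge 1$, let $A$ be a real $m\times m$ matrix and $B$ a real $m\times k$ matrix with $\operatorname{rank}[B, AB, \dots, A^{m-1}B]=m$. Let $g:\mathbb{R}^k\times\mathbb{R}^m\times\mathbb{R}^n\to\mathbb{R}^n$ be Borel measurable and bounded, $\sup_{(u,y,z)}\|g(u,y,z)\|=M_g<\infty$, and Lipschitz continuous in $(y,z)$ uniformly with respect to $u\in\mathbb{R}^k$. For a control $u(\cdot)$ (a measurable function $[0,\infty)\to\mathbb{R}^k$ for which the equation below has a solution) and $y\in\mathbb{R}^m$, let $y(\tau,u(\cdot),y)$ denote the solution of $\frac{dy(\tau)}{d\tau}=Ay(\tau)+Bu(\tau)$ with $y(0)=y$. For $S>0$, $y\in\mathbb{R}^m$, $z\in\mathbb{R}^n$ define $$V(S,y,z):=\bigcup_{u(\cdot)}\left\{\frac{1}{S}\int_0^S g\big(u(\tau),y(\tau,u(\cdot),y),z\big)\,d\tau\right\},$$ the union being over all controls $u(\cdot)$. Then for every $z\in\mathbb{R}^n$, every $y\in\mathbb{R}^m$ and every $S>0$, $$\mathrm{cl}\,(V(S,y,z))=\overline{\mathrm{co}}\,\{g(u,y',z):\ u\in\mathbb{R}^k,\ y'\in\mathbb{R}^m\}.$$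
   Context: $\mathrm{cl}$ denotes closure in $\mathbb{R}^n$ and $\overline{\mathrm{co}}$ the closure of the convex hull. Solutions of the linear equation are understood in the Carathéodory sense. *)

theory Defs
  imports "HOL-Analysis.Analysis"
begin

definition mat_pow :: "real^'m^'m \<Rightarrow> nat \<Rightarrow> real^'m^'m" where
  "mat_pow A i = (((**) A) ^^ i) (mat 1)"

(* rank of the controllability matrix [B, AB, ..., A^(m-1) B], m = CARD('m),
   i.e. the dimension of the space spanned by its columns (column rank) *)
definition ctrb_rank :: "real^'m^'m \<Rightarrow> real^'k^'m \<Rightarrow> nat" where
  "ctrb_rank A B = dim (\<Union>i<CARD('m). columns (mat_pow A i ** B))"

(* yt is a Caratheodory solution on [0,\<infinity>) of y' = A y + B u(t), y(0) = y0 *)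
definition lin_traj :: "real^'m^'m \<Rightarrow> real^'k^'m \<Rightarrow> (real \<Rightarrow> real^'k) \<Rightarrow> real^'m
    \<Rightarrow> (real \<Rightarrow> real^'m) \<Rightarrow> bool" where
  "lin_traj A B u y0 yt \<longleftrightarrow>
     (\<forall>t\<ge>0. (\<lambda>s. A *v yt s + B *v u s) absolutely_integrable_on {0..t} \<and>
             yt t = y0 + integral {0..t} (\<lambda>s. A *v yt s + B *v u s))"

definition adm_control :: "real^'m^'m \<Rightarrow> real^'k^'m \<Rightarrow> real^'m \<Rightarrow> (real \<Rightarrow> real^'k) \<Rightarrow> bool" where
  "adm_control A B y0 u \<longleftrightarrow>
     u \<in> borel_measurable (lebesgue_on {0..}) \<and> (\<exists>yt. lin_traj A B u y0 yt)"

(* V(S,y,z); the trajectory is unique for an admissible control *)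
definition Vset :: "real^'m^'m \<Rightarrow> real^'k^'m \<Rightarrow> (real^'k \<Rightarrow> real^'m \<Rightarrow> real^'n \<Rightarrow> real^'n)
    \<Rightarrow> real \<Rightarrow> real^'m \<Rightarrow> real^'n \<Rightarrow> (real^'n) set" where
  "Vset A B g S y z =
     {(1 / S) *\<^sub>R integral {0..S} (\<lambda>\<tau>. g (u \<tau>) (yt \<tau>) z) | u yt.
        adm_control A B y u \<and> lin_traj A B u y yt}"

end

theory Submission
  imports Defs
begin


typedef (overloaded) 'a endo = "UNIV :: ('a::euclidean_space \<Rightarrow>\<^sub>L 'a) set"
  morphisms Rp Ab by auto

lemmas Ab_inv[simp] = Ab_inverse[OF UNIV_I]
declare Rp_inverse[simp]
lemma Rp_eq_iff: "x = y \<longleftrightarrow> Rp x = Rp y" by (simp add: Rp_inject)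

instantiation endo :: (euclidean_space) real_normed_algebra_1
begin
definition "zero_endo = Ab 0"
definition "one_endo = Ab id_blinfun"
definition "plus_endo x y = Ab (Rp x + Rp y)"
definition "minus_endo x y = Ab (Rp x - Rp y)"
definition "uminus_endo x = Ab (- Rp x)"
definition "times_endo x y = Ab (Rp x o\<^sub>L Rp y)"
definition "scaleR_endo r x = Ab (r *\<^sub>R Rp x)"
definition "norm_endo x = norm (Rp x)"
definition "sgn_endo (x::'a endo) = scaleR (inverse (norm x)) x"
definition "dist_endo (x::'a endo) y = norm (x - y)"
definition "uniformity_endo = (INF e\<in>{0 <..}. principal {(x::'a endo, y). dist x y < e})"
definition "open_endo (S::'a endo set) = (\<forall>x\<in>S. \<forall>\<^sub>F (x', y) in uniformity. x' = x \<longrightarrow> y \<in> S)"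
instance
proof
  fix a b c :: "'a endo" and r s :: real
  show "a + b + c = a + (b + c)" by (simp add: plus_endo_def algebra_simps)
  show "a + b = b + a" by (simp add: plus_endo_def algebra_simps)
  show "0 + a = a" by (simp add: plus_endo_def zero_endo_def)
  show "- a + a = 0" by (simp add: plus_endo_def zero_endo_def uminus_endo_def)
  show "a - b = a + - b" by (simp add: plus_endo_def minus_endo_def uminus_endo_def)
  show "r *\<^sub>R (a + b) = r *\<^sub>R a + r *\<^sub>R b" by (simp add: plus_endo_def scaleR_endo_def algebra_simps)
  show "(r + s) *\<^sub>R a = r *\<^sub>R a + s *\<^sub>R a" by (simp add: plus_endo_def scaleR_endo_def algebra_simps)
  show "r *\<^sub>R s *\<^sub>R a = (r * s) *\<^sub>R a" by (simp add: scaleR_endo_def)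
  show "1 *\<^sub>R a = a" by (simp add: scaleR_endo_def)
  show "a * b * c = a * (b * c)" by (simp add: times_endo_def, rule arg_cong[where f=Ab], rule blinfun_eqI, simp)
  show "(a + b) * c = a * c + b * c"
    by (simp add: times_endo_def plus_endo_def blinfun.bilinear_simps, rule arg_cong[where f=Ab], rule blinfun_eqI, simp add: blinfun.bilinear_simps)
  show "a * (b + c) = a * b + a * c"
    by (simp add: times_endo_def plus_endo_def blinfun.bilinear_simps, rule arg_cong[where f=Ab], rule blinfun_eqI, simp add: blinfun.bilinear_simps)
  show "r *\<^sub>R a * b = r *\<^sub>R (a * b)"
    by (simp add: times_endo_def scaleR_endo_def blinfun.bilinear_simps, rule arg_cong[where f=Ab], rule blinfun_eqI, simp add: blinfun.bilinear_simps)
  show "a * r *\<^sub>R b = r *\<^sub>R (a * b)"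
    by (simp add: times_endo_def scaleR_endo_def blinfun.bilinear_simps, rule arg_cong[where f=Ab], rule blinfun_eqI, simp add: blinfun.bilinear_simps)
  show "1 * a = a" by (simp add: times_endo_def one_endo_def, rule Rp_eq_iff[THEN iffD2], simp, rule blinfun_eqI, simp)
  show "a * 1 = a" by (simp add: times_endo_def one_endo_def, rule Rp_eq_iff[THEN iffD2], simp, rule blinfun_eqI, simp)
  show "(0::'a endo) \<noteq> 1"
  proof
    assume "(0::'a endo) = 1"
    then have "Rp (0::'a endo) = Rp 1" by simp
    then have "norm (0::'a \<Rightarrow>\<^sub>L 'a) = norm (id_blinfun::'a \<Rightarrow>\<^sub>L 'a)" by (simp add: zero_endo_def one_endo_def)
    then show False by simp
  qed
  show "norm (1::'a endo) = 1" by (simp add: norm_endo_def one_endo_def)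
  show "norm (a * b) \<le> norm a * norm b" by (simp add: norm_endo_def times_endo_def norm_blinfun_compose)
  show "dist a b = norm (a - b)" by (simp add: dist_endo_def)
  show "sgn a = inverse (norm a) *\<^sub>R a" by (simp add: sgn_endo_def)
  show "(uniformity :: ('a endo \<times> 'a endo) filter) = (INF e\<in>{0 <..}. principal {(x, y). dist x y < e})"
    by (simp add: uniformity_endo_def)
  fix U :: "'a endo set"
  show "open U = (\<forall>x\<in>U. \<forall>\<^sub>F (x', y) in uniformity. x' = x \<longrightarrow> y \<in> U)"
    by (simp add: open_endo_def)
  show "(norm a = 0) = (a = 0)" by (simp add: norm_endo_def zero_endo_def Rp_eq_iff)
  show "norm (a + b) \<le> norm a + norm b" by (simp add: norm_endo_def plus_endo_def norm_triangle_ineq)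
  show "norm (r *\<^sub>R a) = \<bar>r\<bar> * norm a" by (simp add: norm_endo_def scaleR_endo_def)
qed
end

lemma Rp_add: "Rp (a + b) = Rp a + Rp b" by (simp add: plus_endo_def)
lemma Rp_diff: "Rp (a - b) = Rp a - Rp b" by (simp add: minus_endo_def)
lemma Rp_scaleR: "Rp (r *\<^sub>R a) = r *\<^sub>R Rp a" by (simp add: scaleR_endo_def)
lemma Rp_mult: "Rp (a * b) = Rp a o\<^sub>L Rp b" by (simp add: times_endo_def)
lemma Rp_one: "Rp 1 = id_blinfun" by (simp add: one_endo_def)
lemma Rp_zero: "Rp 0 = 0" by (simp add: zero_endo_def)
lemma norm_Rp: "norm (Rp a) = norm a" by (simp add: norm_endo_def)

lemma bounded_linear_Rp: "bounded_linear Rp"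
  by (rule bounded_linear_intro[where K=1]) (auto simp: Rp_add Rp_scaleR norm_Rp)

instance endo :: (euclidean_space) banach
proof
  fix X :: "nat \<Rightarrow> 'a endo"
  assume "Cauchy X"
  then have "Cauchy (\<lambda>n. Rp (X n))"
    by (simp add: Cauchy_def dist_norm Rp_diff[symmetric] norm_Rp)
  then obtain l where "(\<lambda>n. Rp (X n)) \<longlonglongrightarrow> l" by (auto simp: convergent_eq_Cauchy[symmetric] convergent_def)
  then have "X \<longlonglongrightarrow> Ab l"
    by (simp add: LIMSEQ_iff dist_norm norm_Rp[symmetric] Rp_diff)
  then show "convergent X" by (auto simp: convergent_def)
qed




definition Al :: "real^'m^'m \<Rightarrow> (real^'m) endo" where
  "Al A = Ab (Blinfun (\<lambda>x. A *v x))"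

lemma Rp_Al: "blinfun_apply (Rp (Al A)) x = A *v x"
  by (simp add: Al_def bounded_linear_Blinfun_apply)

definition ev :: "real^'m^'m \<Rightarrow> real \<Rightarrow> real^'m \<Rightarrow> real^'m" where
  "ev A t w = blinfun_apply (Rp (exp (t *\<^sub>R Al A))) w"

lemma ev_0[simp]: "ev A 0 w = w"
  by (simp add: ev_def Rp_one)

lemma bounded_linear_ev: "bounded_linear (ev A t)"
  unfolding ev_def by (rule blinfun.bounded_linear_right)

lemma ev_add: "ev A t (v + w) = ev A t v + ev A t w"
  by (simp add: ev_def blinfun.add_right)

lemma ev_scaleR: "ev A t (r *\<^sub>R w) = r *\<^sub>R ev A t w"
  by (simp add: ev_def blinfun.scaleR_right)

lemma ev_zero[simp]: "ev A t 0 = 0"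
  by (simp add: ev_def)

lemma has_vector_derivative_Rp_apply:
  assumes "(f has_vector_derivative f') F"
  shows "((\<lambda>t. blinfun_apply (Rp (f t)) w) has_vector_derivative blinfun_apply (Rp f') w) F"
proof -
  have bl: "bounded_linear (\<lambda>X. blinfun_apply (Rp X) w)"
    using bounded_linear_compose[OF blinfun.bounded_linear_left bounded_linear_Rp] .
  show ?thesis using bounded_linear.has_vector_derivative[OF bl assms] .
qed

lemma ev_deriv_right: "((\<lambda>t. ev A t w) has_vector_derivative ev A t (A *v w)) (at t within X)"
  using has_vector_derivative_Rp_apply[OF exp_scaleR_has_vector_derivative_right[of "Al A" t X], of w]
  by (simp add: ev_def Rp_mult Rp_Al)

lemma ev_deriv_left: "((\<lambda>t. ev A t w) has_vector_derivative A *v ev A t w) (at t within X)"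
  using has_vector_derivative_Rp_apply[OF exp_scaleR_has_vector_derivative_left[of "Al A" t], of w]
  by (auto simp: ev_def Rp_mult Rp_Al intro: has_vector_derivative_at_within)

lemma ev_comm: "A *v ev A t w = ev A t (A *v w)"
  using vector_derivative_unique_at[OF ev_deriv_left ev_deriv_right] .

lemma continuous_on_ev: "continuous_on X (\<lambda>t. ev A t w)"
  by (rule continuous_on_vector_derivative[OF ev_deriv_right])

definition Fv :: "real^'m^'m \<Rightarrow> real \<Rightarrow> real^'m \<Rightarrow> real^'m" where
  "Fv A t w = integral {0..t} (\<lambda>s. ev A s w)"

lemma Fv_0[simp]: "Fv A 0 w = 0"
  by (simp add: Fv_def)

lemma Fv_id: assumes "0 \<le> t" shows "A *v Fv A t w + w = ev A t w"
proof -
  have int: "(\<lambda>s. ev A s w) integrable_on {0..t}"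
    by (rule integrable_continuous_real[OF continuous_on_ev])
  have "A *v Fv A t w = integral {0..t} ((\<lambda>x. A *v x) \<circ> (\<lambda>s. ev A s w))"
    unfolding Fv_def by (rule integral_linear[OF int, symmetric]) simp
  also have "\<dots> = ev A t w - ev A 0 w"
  proof (rule integral_unique)
    show "(((\<lambda>x. A *v x) \<circ> (\<lambda>s. ev A s w)) has_integral ev A t w - ev A 0 w) {0..t}"
      unfolding o_def
      by (rule fundamental_theorem_of_calculus[OF assms]) (rule ev_deriv_left)
  qed
  finally show ?thesis by simp
qed

lemma Fv_deriv:
  assumes "0 < t"
  shows "((\<lambda>t. Fv A t w) has_vector_derivative ev A t w) (at t)"
proof -
  have "((\<lambda>u. integral {0..u} (\<lambda>s. ev A s w)) has_vector_derivative ev A t w) (at t within {0..t+1})"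
    by (rule integral_has_vector_derivative[OF continuous_on_ev]) (use assms in auto)
  then have "((\<lambda>u. integral {0..u} (\<lambda>s. ev A s w)) has_vector_derivative ev A t w) (at t within {0<..<t+1})"
    by (rule has_vector_derivative_within_subset) auto
  moreover have "at t within {0<..<t+1} = at t"
    by (rule at_within_open) (use assms in auto)
  ultimately show ?thesis unfolding Fv_def by simp
qed

lemma continuous_on_Fv: "continuous_on {0..b} (\<lambda>t. Fv A t w)"
  unfolding Fv_def
  by (rule indefinite_integral_continuous_1[OF integrable_continuous_real[OF continuous_on_ev]])


definition Ys :: "real^'m^'m \<Rightarrow> real^'k^'m \<Rightarrow> real \<Rightarrow> real^'m \<Rightarrow> real^'k \<Rightarrow> real \<Rightarrow> real^'m" where
  "Ys A B a p c t = ev A (t - a) p + Fv A (t - a) (B *v c)"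

definition sol_on :: "real^'m^'m \<Rightarrow> real^'k^'m \<Rightarrow> real \<Rightarrow> real \<Rightarrow> (real \<Rightarrow> real^'k) \<Rightarrow> (real \<Rightarrow> real^'m) \<Rightarrow> bool" where
  "sol_on A B a b u y \<longleftrightarrow> a \<le> b \<and> continuous_on {a..b} y \<and>
     (\<exists>K. finite K \<and> (\<forall>x\<in>{a<..<b} - K. (y has_vector_derivative (A *v y x + B *v u x)) (at x)))"

definition good :: "(real \<Rightarrow> real^'k) \<Rightarrow> bool" where
  "good u \<longleftrightarrow> u \<in> borel_measurable borel \<and> bounded (range u)"

lemma Ys_start[simp]: "Ys A B a p c a = p"
  by (simp add: Ys_def)

lemma Ys_shift: "Ys A B a p c t = Ys A B 0 p c (t - a)"
  by (simp add: Ys_def)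

lemma sol_Ys:
  assumes "a \<le> b"
  shows "sol_on A B a b (\<lambda>_. c) (Ys A B a p c)"
  unfolding sol_on_def
proof (intro conjI exI[of _ "{}"])
  show "a \<le> b" by fact
  have c1: "continuous_on {a..b} (\<lambda>t. ev A (t - a) p)"
    by (rule continuous_on_compose2[OF continuous_on_ev[of UNIV]]) (auto intro!: continuous_intros)
  have c2: "continuous_on {a..b} (\<lambda>t. Fv A (t - a) (B *v c))"
    by (rule continuous_on_compose2[OF continuous_on_Fv[of "b - a"]]) (auto intro!: continuous_intros)
  show "continuous_on {a..b} (Ys A B a p c)"
    unfolding Ys_def using continuous_on_add[OF c1 c2] .
  show "finite {}" by simp
  show "\<forall>x\<in>{a<..<b} - {}. (Ys A B a p c has_vector_derivative A *v Ys A B a p c x + B *v c) (at x)"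
  proof
    fix x assume x: "x \<in> {a<..<b} - {}"
    have d0: "((\<lambda>t. t - a) has_vector_derivative 1) (at x)"
      by (auto intro!: derivative_eq_intros)
    have d1: "((\<lambda>t. ev A (t - a) p) has_vector_derivative ev A (x - a) (A *v p)) (at x)"
      using vector_diff_chain_at[OF d0 ev_deriv_right[of A p "x - a" UNIV]] by (simp add: o_def)
    have d2: "((\<lambda>t. Fv A (t - a) (B *v c)) has_vector_derivative ev A (x - a) (B *v c)) (at x)"
      using vector_diff_chain_at[OF d0 Fv_deriv[of "x - a" A "B *v c"]] x by (simp add: o_def)
    have "A *v Ys A B a p c x + B *v c = ev A (x - a) (A *v p) + ev A (x - a) (B *v c)"
      using Fv_id[of "x - a" A "B *v c"] x
      by (simp add: Ys_def matrix_vector_right_distrib ev_comm)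
    then show "(Ys A B a p c has_vector_derivative A *v Ys A B a p c x + B *v c) (at x)"
      unfolding Ys_def using has_vector_derivative_add[OF d1 d2] by simp
  qed
qed

lemma sol_add:
  assumes "sol_on A B a b u1 y1" "sol_on A B a b u2 y2"
  shows "sol_on A B a b (\<lambda>t. u1 t + u2 t) (\<lambda>t. y1 t + y2 t)"
proof -
  obtain K1 where K1: "finite K1" "\<forall>x\<in>{a<..<b} - K1. (y1 has_vector_derivative (A *v y1 x + B *v u1 x)) (at x)"
    using assms(1) by (auto simp: sol_on_def)
  obtain K2 where K2: "finite K2" "\<forall>x\<in>{a<..<b} - K2. (y2 has_vector_derivative (A *v y2 x + B *v u2 x)) (at x)"
    using assms(2) by (auto simp: sol_on_def)
  show ?thesis unfolding sol_on_def
  proof (intro conjI exI[of _ "K1 \<union> K2"] ballI)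
    show "a \<le> b" using assms by (simp add: sol_on_def)
    show "continuous_on {a..b} (\<lambda>t. y1 t + y2 t)"
      using assms by (auto simp: sol_on_def intro!: continuous_on_add)
    show "finite (K1 \<union> K2)" using K1 K2 by simp
    fix x assume x: "x \<in> {a<..<b} - (K1 \<union> K2)"
    have d: "((\<lambda>t. y1 t + y2 t) has_vector_derivative (A *v y1 x + B *v u1 x) + (A *v y2 x + B *v u2 x)) (at x)"
      by (rule has_vector_derivative_add) (use K1 K2 x in auto)
    then show "((\<lambda>t. y1 t + y2 t) has_vector_derivative A *v (y1 x + y2 x) + B *v (u1 x + u2 x)) (at x)"
      by (simp add: algebra_simps)
  qed
qed

lemma sol_scale:
  assumes "sol_on A B a b u y"
  shows "sol_on A B a b (\<lambda>t. r *\<^sub>R u t) (\<lambda>t. r *\<^sub>R y t)"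
proof -
  obtain K where K: "finite K" "\<forall>x\<in>{a<..<b} - K. (y has_vector_derivative (A *v y x + B *v u x)) (at x)"
    using assms(1) by (auto simp: sol_on_def)
  show ?thesis unfolding sol_on_def
  proof (intro conjI exI[of _ "K"] ballI)
    show "a \<le> b" using assms by (simp add: sol_on_def)
    show "continuous_on {a..b} (\<lambda>t. r *\<^sub>R y t)"
      using assms by (auto simp: sol_on_def intro!: continuous_intros)
    show "finite K" using K by simp
    fix x assume x: "x \<in> {a<..<b} - K"
    show "((\<lambda>t. r *\<^sub>R y t) has_vector_derivative A *v (r *\<^sub>R y x) + B *v (r *\<^sub>R u x)) (at x)"
      using bounded_linear.has_vector_derivative[OF bounded_linear_scaleR_right, of y "A *v y x + B *v u x" "at x" r] K x
      by (auto simp: matrix_vector_mult_scaleR scaleR_add_right)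
  qed
qed

lemma sol_restrict:
  assumes "sol_on A B a b u y" "a \<le> c" "c \<le> d" "d \<le> b"
  shows "sol_on A B c d u y"
  using assms unfolding sol_on_def
  by (auto intro: continuous_on_subset)

lemma sol_concat:
  assumes s1: "sol_on A B a b u1 y1" and s2: "sol_on A B b c u2 y2" and e: "y1 b = y2 b"
  shows "sol_on A B a c (\<lambda>t. if t \<le> b then u1 t else u2 t) (\<lambda>t. if t \<le> b then y1 t else y2 t)"
proof -
  obtain K1 where K1: "finite K1" "\<forall>x\<in>{a<..<b} - K1. (y1 has_vector_derivative (A *v y1 x + B *v u1 x)) (at x)"
    using s1 by (auto simp: sol_on_def)
  obtain K2 where K2: "finite K2" "\<forall>x\<in>{b<..<c} - K2. (y2 has_vector_derivative (A *v y2 x + B *v u2 x)) (at x)"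
    using s2 by (auto simp: sol_on_def)
  have ab: "a \<le> b" and bc: "b \<le> c" using s1 s2 by (auto simp: sol_on_def)
  show ?thesis unfolding sol_on_def
  proof (intro conjI exI[of _ "K1 \<union> K2 \<union> {b}"] ballI)
    show "a \<le> c" using ab bc by simp
    have "continuous_on ({a..b} \<union> {b..c}) (\<lambda>t. if t \<le> b then y1 t else y2 t)"
    proof (rule continuous_on_cases)
      show "continuous_on {a..b} y1" "continuous_on {b..c} y2" using s1 s2 by (auto simp: sol_on_def)
    qed (use e in auto)
    moreover have "{a..b} \<union> {b..c} = {a..c}" using ab bc by auto
    ultimately show "continuous_on {a..c} (\<lambda>t. if t \<le> b then y1 t else y2 t)" by simp
    show "finite (K1 \<union> K2 \<union> {b})" using K1 K2 by simp
    fix x assume x: "x \<in> {a<..<c} - (K1 \<union> K2 \<union> {b})"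
    show "((\<lambda>t. if t \<le> b then y1 t else y2 t) has_vector_derivative
        A *v (if x \<le> b then y1 x else y2 x) + B *v (if x \<le> b then u1 x else u2 x)) (at x)"
    proof (cases "x < b")
      case True
      then have d: "(y1 has_vector_derivative (A *v y1 x + B *v u1 x)) (at x)" using K1 x by auto
      show ?thesis using True
        by (auto intro!: has_vector_derivative_transform_within_open[OF d, of "{a<..<b}"]) (use x in auto)
    next
      case False
      then have xb: "b < x" using x by auto
      then have d: "(y2 has_vector_derivative (A *v y2 x + B *v u2 x)) (at x)" using K2 x by auto
      show ?thesis using xb
        by (auto intro!: has_vector_derivative_transform_within_open[OF d, of "{b<..<c}"]) (use x in auto)
    qed
  qed
qed

lemma sol_shift:
  assumes "sol_on A B a b u y"
  shows "sol_on A B (a + s) (b + s) (\<lambda>t. u (t - s)) (\<lambda>t. y (t - s))"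
proof -
  obtain K where K: "finite K" "\<forall>x\<in>{a<..<b} - K. (y has_vector_derivative (A *v y x + B *v u x)) (at x)"
    using assms by (auto simp: sol_on_def)
  show ?thesis unfolding sol_on_def
  proof (intro conjI exI[of _ "(\<lambda>t. t + s) ` K"] ballI)
    show "a + s \<le> b + s" using assms by (simp add: sol_on_def)
    have "continuous_on {a..b} y" using assms by (simp add: sol_on_def)
    then show "continuous_on {a + s..b + s} (\<lambda>t. y (t - s))"
      by (rule continuous_on_compose2) (auto intro!: continuous_intros)
    show "finite ((\<lambda>t. t + s) ` K)" using K by simp
    fix x assume x: "x \<in> {a + s<..<b + s} - (\<lambda>t. t + s) ` K"
    then have "x - s \<in> {a<..<b} - K" by force
    then have d: "(y has_vector_derivative (A *v y (x - s) + B *v u (x - s))) (at (x - s))" using K by auto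
    have d0: "((\<lambda>t. t - s) has_vector_derivative 1) (at x)"
      by (auto intro!: derivative_eq_intros)
    show "((\<lambda>t. y (t - s)) has_vector_derivative A *v y (x - s) + B *v u (x - s)) (at x)"
      using vector_diff_chain_at[OF d0 d] by (simp add: o_def)
  qed
qed

lemma good_const: "good (\<lambda>_. c)"
  by (simp add: good_def)

lemma good_add: "good u1 \<Longrightarrow> good u2 \<Longrightarrow> good (\<lambda>t. u1 t + u2 t)"
  unfolding good_def
proof (intro conjI, simp_all)
  assume a: "u1 \<in> borel_measurable borel \<and> bounded (range u1)" "u2 \<in> borel_measurable borel \<and> bounded (range u2)"
  then show "(\<lambda>t. u1 t + u2 t) \<in> borel_measurable borel" by (auto intro: borel_measurable_add)
  from a obtain B1 B2 where "\<forall>x. norm (u1 x) \<le> B1" "\<forall>x. norm (u2 x) \<le> B2"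
    by (auto simp: bounded_iff)
  then show "bounded (range (\<lambda>t. u1 t + u2 t))"
    by (auto simp: bounded_iff intro!: exI[of _ "B1 + B2"] order_trans[OF norm_triangle_ineq] add_mono)
qed

lemma good_scale: "good u \<Longrightarrow> good (\<lambda>t. r *\<^sub>R u t)"
  unfolding good_def
proof (intro conjI, simp_all)
  assume a: "u \<in> borel_measurable borel \<and> bounded (range u)"
  then show "(\<lambda>t. r *\<^sub>R u t) \<in> borel_measurable borel" by (auto intro: borel_measurable_scaleR)
  from a obtain B1 where "\<forall>x. norm (u x) \<le> B1"
    by (auto simp: bounded_iff)
  then show "bounded (range (\<lambda>t. r *\<^sub>R u t))"
    by (auto simp: bounded_iff intro!: exI[of _ "\<bar>r\<bar> * B1"] mult_left_mono)
qed

lemma good_if: "good u1 \<Longrightarrow> good u2 \<Longrightarrow> good (\<lambda>t. if t \<le> b then u1 t else u2 t)"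
  unfolding good_def
proof (intro conjI)
  assume a: "u1 \<in> borel_measurable borel \<and> bounded (range u1)" "u2 \<in> borel_measurable borel \<and> bounded (range u2)"
  show "(\<lambda>t. if t \<le> b then u1 t else u2 t) \<in> borel_measurable borel"
    by (rule measurable_If) (use a in auto)
  from a obtain B1 B2 where "\<forall>x. norm (u1 x) \<le> B1" "\<forall>x. norm (u2 x) \<le> B2"
    by (auto simp: bounded_iff)
  then show "bounded (range (\<lambda>t. if t \<le> b then u1 t else u2 t))"
    by (auto simp: bounded_iff intro!: exI[of _ "max B1 B2"] intro: max.coboundedI1 max.coboundedI2)
qed

lemma good_shift: "good u \<Longrightarrow> good (\<lambda>t. u (t - s))"
  unfolding good_def
proof (intro conjI)
  assume a: "u \<in> borel_measurable borel \<and> bounded (range u)"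
  have "(\<lambda>t. t - s) \<in> borel_measurable borel" by simp
  then show "(\<lambda>t. u (t - s)) \<in> borel_measurable borel"
    by (rule measurable_compose[where f="\<lambda>t. t - s"]) (use a in auto)
  from a obtain B1 where "\<forall>x. norm (u x) \<le> B1"
    by (auto simp: bounded_iff)
  then show "bounded (range (\<lambda>t. u (t - s)))"
    by (auto simp: bounded_iff)
qed


lemma Fv_zero[simp]: "Fv A t 0 = 0"
  by (simp add: Fv_def)

lemma Ys_zero: "Ys A B a 0 0 = (\<lambda>_. 0)"
  by (simp add: Ys_def fun_eq_iff)

lemma sol_zero: "a \<le> b \<Longrightarrow> sol_on A B a b (\<lambda>_. 0) (\<lambda>_. 0)"
  using sol_Ys[of a b A B 0 0] by (simp add: Ys_zero)

lemma mat_pow_apply: "mat_pow A j *v x = ((\<lambda>x. A *v x) ^^ j) x"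
proof (induction j arbitrary: x)
  case 0
  then show ?case by (simp add: mat_pow_def)
next
  case (Suc j)
  have "mat_pow A (Suc j) = A ** mat_pow A j" by (simp add: mat_pow_def)
  then show ?case using Suc by (simp add: matrix_vector_mul_assoc[symmetric])
qed

lemma ctrb_span:
  fixes A :: "real^'m^'m" and B :: "real^'k^'m"
  assumes ctrb: "ctrb_rank A B = CARD('m)"
    and orth: "\<And>j c. j < CARD('m) \<Longrightarrow> \<eta> \<bullet> ((\<lambda>x. A *v x) ^^ j) (B *v c) = 0"
  shows "\<eta> = 0"
proof -
  define U where "U = (\<Union>i<CARD('m). columns (mat_pow A i ** B))"
  have "dim U = DIM(real^'m)" using ctrb by (simp add: ctrb_rank_def U_def)
  then have sp: "span U = UNIV" using dim_eq_full[of U] by simp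
  have "orthogonal \<eta> v" if "v \<in> U" for v
  proof -
    from that obtain i k where i: "i < CARD('m)" and v: "v = (mat_pow A i ** B) *v axis k 1"
      by (auto simp: U_def columns_image_basis)
    then have "v = ((\<lambda>x. A *v x) ^^ i) (B *v axis k 1)"
      by (simp add: matrix_vector_mul_assoc[symmetric] mat_pow_apply)
    then show ?thesis using orth[OF i] by (simp add: orthogonal_def)
  qed
  then have "orthogonal \<eta> \<eta>"
    using orthogonal_to_span[of \<eta> U \<eta>] sp by auto
  then show ?thesis by (simp add: orthogonal_def)
qed

lemma deriv_zero_on_open:
  fixes f :: "real \<Rightarrow> real"
  assumes "(f has_vector_derivative D) (at x)" "open S" "x \<in> S" "\<And>y. y \<in> S \<Longrightarrow> f y = 0"
  shows "D = 0"
proof -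
  have "((\<lambda>_. 0::real) has_vector_derivative 0) (at x)" by simp
  then have "(f has_vector_derivative 0) (at x)"
    by (rule has_vector_derivative_transform_within_open[OF _ assms(2,3)]) (use assms(4) in auto)
  then show ?thesis using vector_derivative_unique_at[OF assms(1)] by simp
qed

lemma reach0:
  fixes A :: "real^'m^'m" and B :: "real^'k^'m"
  assumes ctrb: "ctrb_rank A B = CARD('m)" and T: "T > 0"
  shows "\<exists>u y. good u \<and> sol_on A B 0 T u y \<and> y 0 = 0 \<and> y T = q"
proof -
  define R where "R = {y T | u y. good u \<and> sol_on A B 0 T u y \<and> y 0 = 0}"
  have sub: "subspace R"
    unfolding subspace_def
  proof (intro conjI ballI allI)
    show "0 \<in> R" unfolding R_def
      using sol_zero[of 0 T A B] T good_const[of 0] by force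
    fix x y assume "x \<in> R" "y \<in> R"
    then obtain u1 y1 u2 y2 where "good u1" "sol_on A B 0 T u1 y1" "y1 0 = 0" "x = y1 T"
      "good u2" "sol_on A B 0 T u2 y2" "y2 0 = 0" "y = y2 T" unfolding R_def by blast
    then show "x + y \<in> R" unfolding R_def
      by (intro CollectI exI[of _ "\<lambda>t. u1 t + u2 t"] exI[of _ "\<lambda>t. y1 t + y2 t"])
        (auto intro: good_add sol_add)
  next
    fix c x assume "x \<in> R"
    then obtain u1 y1 where "good u1" "sol_on A B 0 T u1 y1" "y1 0 = 0" "x = y1 T"
      unfolding R_def by blast
    then show "c *\<^sub>R x \<in> R" unfolding R_def
      by (intro CollectI exI[of _ "\<lambda>t. c *\<^sub>R u1 t"] exI[of _ "\<lambda>t. c *\<^sub>R y1 t"])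
        (auto intro: good_scale sol_scale)
  qed
  have inR: "Fv A h (B *v c) \<in> R" if h: "0 \<le> h" "h \<le> T" for h c
  proof -
    have s: "sol_on A B 0 T (\<lambda>t. if t \<le> T - h then 0 else c) (\<lambda>t. if t \<le> T - h then 0 else Ys A B (T - h) 0 c t)"
      by (rule sol_concat[OF sol_zero sol_Ys]) (use h in auto)
    have g: "good (\<lambda>t. if t \<le> T - h then 0 else c)"
      by (rule good_if[OF good_const good_const])
    have "Ys A B (T - h) 0 c T = Fv A h (B *v c)" by (simp add: Ys_def)
    then show ?thesis unfolding R_def using s g h
      by (intro CollectI exI[of _ "\<lambda>t. if t \<le> T - h then 0 else c"]
          exI[of _ "\<lambda>t. if t \<le> T - h then 0 else Ys A B (T - h) 0 c t"]) auto
  qed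
  have "R = UNIV"
  proof (rule ccontr)
    assume ne: "R \<noteq> UNIV"
    have spR: "span R = R" using sub by simp
    have "dim R \<noteq> DIM(real^'m)" by (metis ne dim_eq_full spR)
    then have "dim R < DIM(real^'m)" using dim_subset_UNIV[of R] by simp
    then obtain \<eta> :: "real^'m" where eta: "\<eta> \<noteq> 0" "\<And>y. y \<in> span R \<Longrightarrow> orthogonal \<eta> y"
      using orthogonal_to_subspace_exists[of R] by blast
    have o1: "\<eta> \<bullet> Fv A h (B *v c) = 0" if "0 \<le> h" "h \<le> T" for h c
      using eta(2)[of "Fv A h (B *v c)"] inR[OF that] span_base by (auto simp: orthogonal_def)
    have o2: "\<forall>h\<in>{0<..<T}. \<forall>c. \<eta> \<bullet> ev A h (((\<lambda>x. A *v x) ^^ j) (B *v c)) = 0" for j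
    proof (induction j)
      case 0
      show ?case
      proof (intro ballI allI)
        fix h c assume h: "h \<in> {0<..<T}"
        have "((\<lambda>h. \<eta> \<bullet> Fv A h (B *v c)) has_vector_derivative \<eta> \<bullet> ev A h (B *v c)) (at h)"
          using bounded_linear.has_vector_derivative[OF bounded_linear_inner_right Fv_deriv[of h A "B *v c"]] h
          by simp
        then have "\<eta> \<bullet> ev A h (B *v c) = 0"
          by (rule deriv_zero_on_open[of _ _ _ "{0<..<T}"]) (use h o1 in auto)
        then show "\<eta> \<bullet> ev A h (((\<lambda>x. A *v x) ^^ 0) (B *v c)) = 0" by simp
      qed
    next
      case (Suc j)
      show ?case
      proof (intro ballI allI)
        fix h c assume h: "h \<in> {0<..<T}"
        define w where "w = ((\<lambda>x. A *v x) ^^ j) (B *v c)"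
        have "((\<lambda>h. \<eta> \<bullet> ev A h w) has_vector_derivative \<eta> \<bullet> ev A h (A *v w)) (at h)"
          using bounded_linear.has_vector_derivative[OF bounded_linear_inner_right ev_deriv_right[of A w h UNIV]]
          by simp
        then have "\<eta> \<bullet> ev A h (A *v w) = 0"
          by (rule deriv_zero_on_open[of _ _ _ "{0<..<T}"]) (use h Suc in \<open>auto simp: w_def\<close>)
        then show "\<eta> \<bullet> ev A h (((\<lambda>x. A *v x) ^^ Suc j) (B *v c)) = 0" by (simp add: w_def)
      qed
    qed
    have o3: "\<eta> \<bullet> ((\<lambda>x. A *v x) ^^ j) (B *v c) = 0" for j c
    proof -
      define w where "w = ((\<lambda>x. A *v x) ^^ j) (B *v c)"
      have "continuous_on UNIV (\<lambda>h. \<eta> \<bullet> ev A h w)"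
        by (intro continuous_intros continuous_on_ev)
      then have "\<forall>x. ((\<lambda>h. \<eta> \<bullet> ev A h w) \<longlongrightarrow> \<eta> \<bullet> ev A x w) (at x)"
        by (simp add: continuous_on_def)
      then have "((\<lambda>h. \<eta> \<bullet> ev A h w) \<longlongrightarrow> \<eta> \<bullet> ev A 0 w) (at 0)"
        by blast
      then have l1: "((\<lambda>h. \<eta> \<bullet> ev A h w) \<longlongrightarrow> \<eta> \<bullet> w) (at_right 0)"
        by (simp add: tendsto_within_subset filterlim_at_split)
      have "eventually (\<lambda>h. \<eta> \<bullet> ev A h w = 0) (at_right 0)"
        unfolding eventually_at_right_field using T o2 by (auto simp: w_def)
      then have l2: "((\<lambda>h. \<eta> \<bullet> ev A h w) \<longlongrightarrow> 0) (at_right 0)"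
        by (rule tendsto_eventually)
      show ?thesis using tendsto_unique[OF trivial_limit_at_right_real l1 l2] by (simp add: w_def)
    qed
    have "\<eta> = 0" by (rule ctrb_span[OF ctrb o3])
    then show False using eta by simp
  qed
  then have "q \<in> R" by simp
  then show ?thesis unfolding R_def by blast
qed

lemma steer:
  fixes A :: "real^'m^'m" and B :: "real^'k^'m"
  assumes ctrb: "ctrb_rank A B = CARD('m)" and T: "T > 0"
  shows "\<exists>u y. good u \<and> sol_on A B 0 T u y \<and> y 0 = p \<and> y T = q"
proof -
  obtain u1 y1 where 1: "good u1" "sol_on A B 0 T u1 y1" "y1 0 = 0" "y1 T = q - ev A T p"
    using reach0[OF ctrb T] by blast
  have 2: "sol_on A B 0 T (\<lambda>_. 0) (Ys A B 0 p 0)" by (rule sol_Ys) (use T in simp)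
  have "Ys A B 0 p 0 T = ev A T p" by (simp add: Ys_def)
  then show ?thesis using 1 sol_add[OF 1(2) 2] good_add[OF 1(1) good_const[of 0]]
    by (intro exI[of _ "\<lambda>t. u1 t + 0"] exI[of _ "\<lambda>t. y1 t + Ys A B 0 p 0 t"]) auto
qed


lemma borel_to_lebesgue_on: "u \<in> borel_measurable borel \<Longrightarrow> u \<in> borel_measurable (lebesgue_on S)"
  by (rule measurable_restrict_space1) (simp add: measurable_completion)

lemma integ_g:
  fixes g :: "real^'k \<Rightarrow> real^'m \<Rightarrow> real^'n \<Rightarrow> real^'n"
  assumes meas: "(\<lambda>(u, y, z). g u y z) \<in> borel_measurable borel"
    and bnd: "\<And>u y z. norm (g u y z) \<le> M"
    and s: "sol_on A B a b u y" and gu: "good u"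
  shows "(\<lambda>t. g (u t) (y t) z) integrable_on {a..b}"
proof -
  have mu: "u \<in> borel_measurable (lebesgue_on {a..b})"
    using gu by (simp add: good_def borel_to_lebesgue_on)
  have my: "y \<in> borel_measurable (lebesgue_on {a..b})"
    using s by (intro continuous_imp_measurable_on_sets_lebesgue) (auto simp: sol_on_def)
  have mp: "(\<lambda>t. (u t, y t, z)) \<in> borel_measurable (lebesgue_on {a..b})"
    using mu my by (intro borel_measurable_Pair) auto
  have "(\<lambda>t. (\<lambda>(u, y, z). g u y z) (u t, y t, z)) \<in> borel_measurable (lebesgue_on {a..b})"
    by (rule measurable_compose[OF mp meas])
  then have mf: "(\<lambda>t. g (u t) (y t) z) \<in> borel_measurable (lebesgue_on {a..b})" by simp
  have "(\<lambda>t. g (u t) (y t) z) absolutely_integrable_on {a..b}"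
    by (rule measurable_bounded_by_integrable_imp_absolutely_integrable[OF mf, of "\<lambda>_. M"])
      (auto simp: bnd)
  then show ?thesis by (rule set_lebesgue_integral_eq_integral(1))
qed

lemma lin_traj_intro:
  assumes s: "\<And>t. 0 \<le> t \<Longrightarrow> sol_on A B 0 t u y" and gu: "good u"
  shows "lin_traj A B u (y 0) y"
  unfolding lin_traj_def
proof (intro allI impI conjI)
  fix t :: real assume t: "0 \<le> t"
  obtain K where K: "finite K" "\<forall>x\<in>{0<..<t} - K. (y has_vector_derivative (A *v y x + B *v u x)) (at x)"
    using s[OF t] by (auto simp: sol_on_def)
  have cy: "continuous_on {0..t} y" using s[OF t] by (simp add: sol_on_def)
  have hi: "((\<lambda>s. A *v y s + B *v u s) has_integral y t - y 0) {0..t}"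
    by (rule fundamental_theorem_of_calculus_interior_strong[OF K(1) t _ cy]) (use K in auto)
  then show "y t = y 0 + integral {0..t} (\<lambda>s. A *v y s + B *v u s)"
    by (simp add: integral_unique)
  have "compact (y ` {0..t})" by (rule compact_continuous_image[OF cy]) simp
  then obtain C where C: "\<And>s. s \<in> {0..t} \<Longrightarrow> norm (y s) \<le> C"
    using compact_imp_bounded[of "y ` {0..t}"] unfolding bounded_iff by (metis image_eqI)
  obtain D where D: "\<And>s. norm (u s) \<le> D"
    using gu by (auto simp: good_def bounded_iff)
  obtain KA where KA: "\<And>x. norm (A *v x) \<le> norm x * KA" "KA > 0"
    using bounded_linear.pos_bounded[OF matrix_vector_mul_bounded_linear[of A]] by blast
  obtain KB where KB: "\<And>x. norm (B *v x) \<le> norm x * KB" "KB > 0"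
    using bounded_linear.pos_bounded[OF matrix_vector_mul_bounded_linear[of B]] by blast
  show "(\<lambda>s. A *v y s + B *v u s) absolutely_integrable_on {0..t}"
  proof (rule absolutely_integrable_integrable_bound[where g="\<lambda>_. C * KA + D * KB"])
    fix s assume "s \<in> {0..t}"
    then have "norm (A *v y s) \<le> C * KA"
      using KA C by (meson mult_right_mono less_imp_le order_trans)
    moreover have "norm (B *v u s) \<le> D * KB"
      using KB D by (meson mult_right_mono less_imp_le order_trans)
    ultimately show "norm (A *v y s + B *v u s) \<le> C * KA + D * KB"
      by (meson add_mono norm_triangle_ineq order_trans)
  qed (use hi in auto)
qed

lemma in_Vset:
  fixes g :: "real^'k \<Rightarrow> real^'m \<Rightarrow> real^'n \<Rightarrow> real^'n"
    and A :: "real^'m^'m" and B :: "real^'k^'m"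
  assumes s: "sol_on A B 0 S u y" and gu: "good u" and y0: "y 0 = p"
  shows "(1 / S) *\<^sub>R integral {0..S} (\<lambda>t. g (u t) (y t) z) \<in> Vset A B g S p z"
proof -
  define u' where "u' = (\<lambda>t. if t \<le> S then u t else 0)"
  define y' where "y' = (\<lambda>t. if t \<le> S then y t else Ys A B S (y S) 0 t)"
  have S0: "0 \<le> S" using s by (simp add: sol_on_def)
  have gu': "good u'" unfolding u'_def by (rule good_if[OF gu good_const])
  have s': "sol_on A B 0 t u' y'" if t: "0 \<le> t" for t
  proof -
    have "sol_on A B 0 (max S t) u' y'"
      unfolding u'_def y'_def by (rule sol_concat[OF s sol_Ys]) auto
    then show ?thesis by (rule sol_restrict) (use t in auto)
  qed
  have lt: "lin_traj A B u' (y' 0) y'" by (rule lin_traj_intro[OF s' gu'])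
  have y'0: "y' 0 = p" using y0 S0 by (simp add: y'_def)
  have adm: "adm_control A B p u'"
    unfolding adm_control_def using gu' lt y'0 by (auto simp: good_def borel_to_lebesgue_on)
  have "integral {0..S} (\<lambda>t. g (u' t) (y' t) z) = integral {0..S} (\<lambda>t. g (u t) (y t) z)"
    by (rule integral_cong) (simp add: u'_def y'_def)
  then show ?thesis unfolding Vset_def using adm lt y'0
    by (intro CollectI exI[of _ u'] exI[of _ y']) auto
qed


lemma sol_const_pt: "sol_on A B a a u (\<lambda>_. p)"
  by (auto simp: sol_on_def intro!: exI[of _ "{}"])

lemma blocks:
  fixes g :: "real^'k \<Rightarrow> real^'m \<Rightarrow> real^'n \<Rightarrow> real^'n"
    and A :: "real^'m^'m" and B :: "real^'k^'m"
    and U :: "nat \<Rightarrow> real^'k" and Y :: "nat \<Rightarrow> real^'m"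
    and K :: nat and sl :: "nat \<Rightarrow> real" and \<beta> :: "nat \<Rightarrow> nat"
  assumes ctrb: "ctrb_rank A B = CARD('m)"
    and meas: "(\<lambda>(u, y, z). g u y z) \<in> borel_measurable borel"
    and bnd: "\<And>u y z. norm (g u y z) \<le> M"
    and lipy: "\<And>u y y' z. dist (g u y z) (g u y' z) \<le> L * dist y y'"
    and L0: "0 \<le> L"
    and tau: "0 < \<tau>"
    and l0: "\<And>b. 0 \<le> sl b"
    and dev: "\<And>b t. 0 \<le> t \<Longrightarrow> t \<le> sl b \<Longrightarrow> dist (Ys A B 0 (Y (\<beta> b)) (U (\<beta> b)) t) (Y (\<beta> b)) \<le> d"
  shows "\<exists>u y. good u \<and> sol_on A B 0 (\<Sum>b<K. \<tau> + sl b) u y \<and> y 0 = p \<and>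
    norm (integral {0..(\<Sum>b<K. \<tau> + sl b)} (\<lambda>t. g (u t) (y t) z) - (\<Sum>b<K. sl b *\<^sub>R g (U (\<beta> b)) (Y (\<beta> b)) z))
      \<le> (\<Sum>b<K. M * \<tau> + L * d * sl b)"
proof (induction K)
  case 0
  show ?case
    by (intro exI[of _ "\<lambda>_. 0"] exI[of _ "\<lambda>_. p"]) (simp add: good_const sol_const_pt)
next
  case (Suc K)
  define T where "T = (\<Sum>b<K. \<tau> + sl b)"
  define T' where "T' = T + \<tau>"
  define T'' where "T'' = T' + sl K"
  define i where "i = \<beta> K"
  have M0: "0 \<le> M" by (rule order_trans[OF norm_ge_zero bnd])
  have T0: "0 \<le> T" unfolding T_def using tau l0 by (intro sum_nonneg) (simp add: add_nonneg_nonneg less_imp_le)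
  have TT': "T \<le> T'" "T' \<le> T''" using tau l0[of K] by (auto simp: T'_def T''_def)
  have sumT: "(\<Sum>b<Suc K. \<tau> + sl b) = T''" by (simp add: T_def T'_def T''_def)
  obtain u y where IH: "good u" "sol_on A B 0 T u y" "y 0 = p"
    "norm (integral {0..T} (\<lambda>t. g (u t) (y t) z) - (\<Sum>b<K. sl b *\<^sub>R g (U (\<beta> b)) (Y (\<beta> b)) z))
      \<le> (\<Sum>b<K. M * \<tau> + L * d * sl b)"
    using Suc.IH unfolding T_def by blast
  obtain u1 y1 where st: "good u1" "sol_on A B 0 \<tau> u1 y1" "y1 0 = y T" "y1 \<tau> = Y i"
    using steer[OF ctrb tau] by blast
  have sh: "sol_on A B T T' (\<lambda>t. u1 (t - T)) (\<lambda>t. y1 (t - T))"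
    using sol_shift[OF st(2), of T] by (simp add: T'_def add.commute)
  have sg: "sol_on A B T' T'' (\<lambda>_. U i) (Ys A B T' (Y i) (U i))"
    by (rule sol_Ys) (use TT' in simp)
  have c1: "sol_on A B T T'' (\<lambda>t. if t \<le> T' then u1 (t - T) else U i)
      (\<lambda>t. if t \<le> T' then y1 (t - T) else Ys A B T' (Y i) (U i) t)"
    by (rule sol_concat[OF sh sg]) (simp add: T'_def st(4))
  define u' where "u' = (\<lambda>t. if t \<le> T then u t else (if t \<le> T' then u1 (t - T) else U i))"
  define y' where "y' = (\<lambda>t. if t \<le> T then y t else (if t \<le> T' then y1 (t - T) else Ys A B T' (Y i) (U i) t))"
  have c2: "sol_on A B 0 T'' u' y'"
    unfolding u'_def y'_def by (rule sol_concat[OF IH(2) c1]) (use TT' st(3) in simp)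
  have gu': "good u'"
    unfolding u'_def by (rule good_if[OF IH(1) good_if[OF good_shift[OF st(1)] good_const]])
  have y'0: "y' 0 = p" using T0 IH(3) by (simp add: y'_def)
  define f where "f = (\<lambda>t. g (u' t) (y' t) z)"
  define gi where "gi = g (U i) (Y i) z"
  have fint: "f integrable_on {0..T''}" unfolding f_def by (rule integ_g[OF meas bnd c2 gu'])
  have fint2: "f integrable_on {T..T''}"
    by (rule integrable_subinterval_real[OF fint]) (use T0 in auto)
  have fint3: "f integrable_on {T..T'}"
    by (rule integrable_subinterval_real[OF fint]) (use T0 TT' in auto)
  have split1: "integral {0..T''} f = integral {0..T} f + integral {T..T''} f"
    using Henstock_Kurzweil_Integration.integral_combine[OF T0 _ fint] TT' by simp
  have split2: "integral {T..T''} f = integral {T..T'} f + integral {T'..T''} f"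
    using Henstock_Kurzweil_Integration.integral_combine[OF TT'(1) TT'(2) fint2] by simp
  have e1: "integral {0..T} f = integral {0..T} (\<lambda>t. g (u t) (y t) z)"
    by (rule integral_cong) (simp add: f_def u'_def y'_def)
  have b2: "norm (integral {T..T'} f) \<le> M * \<tau>"
  proof -
    have "norm (integral {T..T'} f) \<le> integral {T..T'} (\<lambda>_. M)"
      by (rule integral_norm_bound_integral[OF fint3]) (auto simp: f_def bnd)
    also have "\<dots> = M * \<tau>" using TT' by (simp add: T'_def)
    finally show ?thesis .
  qed
  define f2 where "f2 = (\<lambda>t. g (U i) (Ys A B T' (Y i) (U i) t) z)"
  have f2int: "f2 integrable_on {T'..T''}" unfolding f2_def
    by (rule integ_g[OF meas bnd sg good_const])
  have e3: "integral {T'..T''} f = integral {T'..T''} f2"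
  proof (rule integral_spike[of "{T'}"])
    fix t assume "t \<in> {T'..T''} - {T'}"
    then have "T' < t" by auto
    then show "f2 t = f t" using TT' by (simp add: f_def f2_def u'_def y'_def)
  qed simp
  have b3: "norm (integral {T'..T''} f2 - sl K *\<^sub>R gi) \<le> L * d * sl K"
  proof -
    have "integral {T'..T''} f2 - sl K *\<^sub>R gi = integral {T'..T''} (\<lambda>t. f2 t - gi)"
      using integral_diff[OF f2int integrable_const_ivl[of gi T' T'']] TT'
      by (simp add: T''_def)
    also have "norm \<dots> \<le> integral {T'..T''} (\<lambda>_. L * d)"
    proof (rule integral_norm_bound_integral)
      show "(\<lambda>t. f2 t - gi) integrable_on {T'..T''}"
        using integrable_diff[OF f2int integrable_const_ivl[of gi T' T'']] by simp
      fix t assume t: "t \<in> {T'..T''}"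
      have "norm (f2 t - gi) = dist (g (U i) (Ys A B 0 (Y i) (U i) (t - T')) z) (g (U i) (Y i) z)"
        by (simp add: f2_def gi_def dist_norm Ys_shift[of A B T' "Y i" "U i" t])
      also have "\<dots> \<le> L * dist (Ys A B 0 (Y i) (U i) (t - T')) (Y i)" by (rule lipy)
      also have "\<dots> \<le> L * d"
        using dev[of "t - T'" K] t L0 by (auto simp: i_def T''_def intro!: mult_left_mono)
      finally show "norm (f2 t - gi) \<le> L * d" .
    qed (rule integrable_const_ivl)
    also have "\<dots> = L * d * sl K" using TT' by (simp add: T''_def)
    finally show ?thesis .
  qed
  have "integral {0..T''} f - (\<Sum>b<Suc K. sl b *\<^sub>R g (U (\<beta> b)) (Y (\<beta> b)) z)
      = (integral {0..T} (\<lambda>t. g (u t) (y t) z) - (\<Sum>b<K. sl b *\<^sub>R g (U (\<beta> b)) (Y (\<beta> b)) z))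
        + integral {T..T'} f + (integral {T'..T''} f2 - sl K *\<^sub>R gi)"
    using split1 split2 e1 e3 by (simp add: gi_def i_def algebra_simps)
  also have "norm \<dots> \<le> (\<Sum>b<K. M * \<tau> + L * d * sl b) + M * \<tau> + L * d * sl K"
    using IH(4) b2 b3 by (meson add_mono norm_triangle_ineq order_trans)
  finally have "norm (integral {0..T''} f - (\<Sum>b<Suc K. sl b *\<^sub>R g (U (\<beta> b)) (Y (\<beta> b)) z))
      \<le> (\<Sum>b<Suc K. M * \<tau> + L * d * sl b)" by simp
  then show ?case unfolding sumT f_def using gu' c2 y'0 by blast
qed


lemma sum_mod_group:
  fixes f :: "nat \<Rightarrow> 'a::comm_monoid_add"
  shows "(\<Sum>b<N*n. f (b mod n)) = (\<Sum>m<N. \<Sum>i<n. f i)"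
proof -
  have "(\<Sum>b<N*n. f (b mod n)) = (\<Sum>m<N. sum (\<lambda>b. f (b mod n)) {m*n..<m*n+n})"
    using sum.nat_group[of "\<lambda>b. f (b mod n)" n N] by simp
  also have "\<dots> = (\<Sum>m<N. \<Sum>i<n. f i)"
  proof (rule sum.cong[OF refl])
    fix m
    have "sum (\<lambda>b. f (b mod n)) {0 + m*n..<n + m*n} = sum (\<lambda>i. f ((i + m*n) mod n)) {0..<n}"
      by (rule sum.shift_bounds_nat_ivl)
    also have "\<dots> = (\<Sum>i<n. f i)"
      by (rule sum.cong) auto
    finally show "sum (\<lambda>b. f (b mod n)) {m*n..<m*n+n} = (\<Sum>i<n. f i)" by (simp add: add.commute)
  qed
  finally show ?thesis .
qed

lemma Vset_sub:
  fixes g :: "real^'k \<Rightarrow> real^'m \<Rightarrow> real^'n \<Rightarrow> real^'n"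
    and A :: "real^'m^'m" and B :: "real^'k^'m"
  assumes meas: "(\<lambda>(u, y, z). g u y z) \<in> borel_measurable borel"
    and bnd: "\<And>u y z. norm (g u y z) \<le> M"
    and S: "S > 0"
  shows "Vset A B g S p z \<subseteq> closure (convex hull {g u y' z | u y'. True})"
proof
  fix v assume "v \<in> Vset A B g S p z"
  then obtain u yt where v: "v = (1 / S) *\<^sub>R integral {0..S} (\<lambda>\<tau>. g (u \<tau>) (yt \<tau>) z)"
    and adm: "adm_control A B p u" and lt: "lin_traj A B u p yt"
    unfolding Vset_def by blast
  define f where "f = (\<lambda>\<tau>. g (u \<tau>) (yt \<tau>) z)"
  define C where "C = closure (convex hull {g u y' z | u y'. True})"
  have mu: "u \<in> borel_measurable (lebesgue_on {0..S})"
    using adm unfolding adm_control_def by (auto intro: measurable_restrict_mono)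
  have ai: "(\<lambda>s. A *v yt s + B *v u s) absolutely_integrable_on {0..S}"
    and yt: "\<And>t. 0 \<le> t \<Longrightarrow> yt t = p + integral {0..t} (\<lambda>s. A *v yt s + B *v u s)"
    using lt S unfolding lin_traj_def by auto
  have "continuous_on {0..S} (\<lambda>t. p + integral {0..t} (\<lambda>s. A *v yt s + B *v u s))"
    by (intro continuous_intros indefinite_integral_continuous_1 set_lebesgue_integral_eq_integral(1) ai)
  then have cy: "continuous_on {0..S} yt"
    by (rule continuous_on_eq) (auto simp: yt)
  have my: "yt \<in> borel_measurable (lebesgue_on {0..S})"
    by (rule continuous_imp_measurable_on_sets_lebesgue[OF cy]) auto
  have mp: "(\<lambda>t. (u t, yt t, z)) \<in> borel_measurable (lebesgue_on {0..S})"
    using mu my by (intro borel_measurable_Pair) auto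
  have "(\<lambda>t. (\<lambda>(u, y, z). g u y z) (u t, yt t, z)) \<in> borel_measurable (lebesgue_on {0..S})"
    by (rule measurable_compose[OF mp meas])
  then have mf: "f \<in> borel_measurable (lebesgue_on {0..S})" by (simp add: f_def)
  have "f absolutely_integrable_on {0..S}"
    by (rule measurable_bounded_by_integrable_imp_absolutely_integrable[OF mf, of "\<lambda>_. M"])
      (auto simp: bnd f_def)
  then have fint: "f integrable_on {0..S}" by (rule set_lebesgue_integral_eq_integral(1))
  have fC: "f t \<in> C" for t
    unfolding C_def f_def by (rule subsetD[OF closure_subset], rule hull_inc) blast
  show "v \<in> C"
  proof (rule ccontr)
    assume "v \<notin> C"
    moreover have "convex C" unfolding C_def by (simp add: convex_closure)
    moreover have "closed C" unfolding C_def by simp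
    ultimately obtain a b where ab: "inner a v < b" "\<And>x. x \<in> C \<Longrightarrow> inner a x > b"
      using separating_hyperplane_closed_point[of C v] by blast
    have "integral {0..S} (\<lambda>_. b) \<le> integral {0..S} ((\<lambda>x. inner a x) \<circ> f)"
    proof (rule integral_le)
      show "((\<lambda>x. inner a x) \<circ> f) integrable_on {0..S}"
        by (rule integrable_linear[OF fint bounded_linear_inner_right])
    qed (use ab(2) fC in \<open>auto intro: less_imp_le\<close>)
    also have "\<dots> = inner a (integral {0..S} f)"
      by (rule integral_linear[OF fint bounded_linear_inner_right])
    finally have "S * b \<le> inner a (integral {0..S} f)" using S by simp
    then have "b \<le> inner a v" using S
      by (simp add: v f_def[symmetric] inner_scaleR_right field_simps)
    then show False using ab(1) by simp
  qed
qed


lemma approx: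
  fixes g :: "real^'k \<Rightarrow> real^'m \<Rightarrow> real^'n \<Rightarrow> real^'n"
    and A :: "real^'m^'m" and B :: "real^'k^'m"
  assumes ctrb: "ctrb_rank A B = CARD('m)"
    and meas: "(\<lambda>(u, y, z). g u y z) \<in> borel_measurable borel"
    and bnd: "\<And>u y z. norm (g u y z) \<le> M"
    and lipy: "\<And>u y y' z. dist (g u y z) (g u y' z) \<le> L * dist y y'"
    and L0: "0 \<le> L"
    and S: "S > 0"
    and q: "q \<in> convex hull {g u y' z | u y'. True}"
    and e: "\<epsilon> > 0"
  shows "\<exists>v\<in>Vset A B g S p z. dist v q < \<epsilon>"
proof -
  have M0: "0 \<le> M" by (rule order_trans[OF norm_ge_zero bnd])
  obtain F w where F: "finite F" "F \<subseteq> {g u y' z | u y'. True}" "\<forall>x\<in>F. 0 \<le> w x" "sum w F = 1"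
    "(\<Sum>x\<in>F. w x *\<^sub>R x) = q"
    using q unfolding convex_hull_explicit by blast
  define n where "n = card F"
  obtain h where h: "bij_betw h {0..<n} F"
    using ex_bij_betw_nat_finite[OF F(1)] n_def by blast
  have "F \<noteq> {}" using F(4) by auto
  then have n0: "n > 0" using F(1) by (simp add: n_def card_gt_0_iff)
  have "\<forall>i. \<exists>uy. i < n \<longrightarrow> h i = g (fst uy) (snd uy) z"
  proof
    fix i
    show "\<exists>uy. i < n \<longrightarrow> h i = g (fst uy) (snd uy) z"
    proof (cases "i < n")
      case True
      then have "h i \<in> F" using h by (auto simp: bij_betw_def)
      then obtain u y' where "h i = g u y' z" using F(2) by blast
      then show ?thesis by (intro exI[of _ "(u, y')"]) simp
    qed simp
  qed
  then obtain UY where UY: "\<And>i. i < n \<Longrightarrow> h i = g (fst (UY i)) (snd (UY i)) z"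
    by metis
  define U where "U i = fst (UY i)" for i
  define Y where "Y i = snd (UY i)" for i
  define gv where "gv i = g (U i) (Y i) z" for i
  define lam where "lam i = w (h i)" for i
  have hgv: "\<And>i. i < n \<Longrightarrow> h i = gv i" using UY by (simp add: gv_def U_def Y_def)
  have lam0: "\<And>i. i < n \<Longrightarrow> 0 \<le> lam i"
    using h F(3) by (auto simp: lam_def bij_betw_def)
  have lsum: "(\<Sum>i<n. lam i) = 1"
    using sum.reindex_bij_betw[OF h, of w] F(4) by (simp add: lam_def atLeast0LessThan)
  have qsum: "(\<Sum>i<n. lam i *\<^sub>R gv i) = q"
  proof -
    have "(\<Sum>i<n. lam i *\<^sub>R gv i) = (\<Sum>i<n. w (h i) *\<^sub>R h i)"
      by (rule sum.cong) (auto simp: lam_def hgv)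
    also have "\<dots> = q"
      using sum.reindex_bij_betw[OF h, of "\<lambda>x. w x *\<^sub>R x"] F(5) by (simp add: atLeast0LessThan)
    finally show ?thesis .
  qed
  have lam1: "\<And>i. i < n \<Longrightarrow> lam i \<le> 1"
  proof -
    fix i assume "i < n"
    then have "lam i \<le> (\<Sum>i<n. lam i)"
      by (intro member_le_sum) (auto intro: lam0)
    then show "lam i \<le> 1" using lsum by simp
  qed
  have nq: "norm q \<le> M"
  proof -
    have "norm q \<le> (\<Sum>i<n. norm (lam i *\<^sub>R gv i))" unfolding qsum[symmetric] by (rule norm_sum)
    also have "\<dots> \<le> (\<Sum>i<n. lam i * M)"
      by (rule sum_mono) (auto simp: lam0 gv_def bnd intro!: mult_left_mono)
    also have "\<dots> = M" using lsum by (simp add: sum_distrib_right[symmetric])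
    finally show ?thesis .
  qed
  define \<theta> where "\<theta> = min (1/2) (\<epsilon> / (8 * (M + 1)))"
  define d where "d = \<epsilon> / (4 * (L + 1))"
  have "0 < \<epsilon> / (8 * (M + 1))" using e M0 by simp
  then have th0: "0 < \<theta>" "\<theta> \<le> 1/2" unfolding \<theta>_def by linarith+
  have th1: "2 * M * \<theta> \<le> \<epsilon> / 4"
  proof -
    have "\<theta> \<le> \<epsilon> / (8 * (M + 1))" by (simp add: \<theta>_def)
    then have "2 * M * \<theta> \<le> 2 * M * (\<epsilon> / (8 * (M + 1)))" using M0 by (intro mult_left_mono) auto
    also have "\<dots> = (\<epsilon> / 4) * (M / (M + 1))" using M0 by (simp add: field_simps)
    also have "\<dots> \<le> (\<epsilon> / 4) * 1" using M0 e by (intro mult_left_mono) auto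
    finally show ?thesis by simp
  qed
  have d0: "0 < d" using e L0 by (simp add: d_def)
  have d1: "L * d \<le> \<epsilon> / 4"
  proof -
    have "L * d = (\<epsilon> / 4) * (L / (L + 1))" using L0 by (simp add: d_def field_simps)
    also have "\<dots> \<le> (\<epsilon> / 4) * 1" using L0 e by (intro mult_left_mono) auto
    finally show ?thesis by simp
  qed
  have "\<forall>i. \<exists>\<delta>. i < n \<longrightarrow> 0 < \<delta> \<and> (\<forall>t. 0 \<le> t \<and> t \<le> \<delta> \<longrightarrow> dist (Ys A B 0 (Y i) (U i) t) (Y i) \<le> d)"
  proof
    fix i
    have "continuous_on {0..1} (Ys A B 0 (Y i) (U i))"
      using sol_Ys[of 0 1 A B "U i" "Y i"] by (simp add: sol_on_def)
    then obtain \<delta> where \<delta>: "\<delta> > 0" "\<And>t. t \<in> {0..1} \<Longrightarrow> dist t 0 < \<delta> \<Longrightarrow>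
        dist (Ys A B 0 (Y i) (U i) t) (Ys A B 0 (Y i) (U i) 0) < d"
      using d0 unfolding continuous_on_iff by (metis atLeastAtMost_iff order_refl zero_le_one)
    show "\<exists>\<delta>. i < n \<longrightarrow> 0 < \<delta> \<and> (\<forall>t. 0 \<le> t \<and> t \<le> \<delta> \<longrightarrow> dist (Ys A B 0 (Y i) (U i) t) (Y i) \<le> d)"
    proof (intro exI[of _ "min (\<delta>/2) 1"] impI conjI allI)
      show "0 < min (\<delta>/2) 1" using \<delta> by simp
      fix t assume t: "0 \<le> t \<and> t \<le> min (\<delta>/2) 1"
      then have "dist (Ys A B 0 (Y i) (U i) t) (Ys A B 0 (Y i) (U i) 0) < d"
        using \<delta> by (intro \<delta>(2)) (auto simp: dist_real_def)
      then show "dist (Ys A B 0 (Y i) (U i) t) (Y i) \<le> d" by simp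
    qed
  qed
  then obtain \<delta>f where \<delta>f: "\<And>i. i < n \<Longrightarrow> 0 < \<delta>f i"
    "\<And>i t. i < n \<Longrightarrow> 0 \<le> t \<Longrightarrow> t \<le> \<delta>f i \<Longrightarrow> dist (Ys A B 0 (Y i) (U i) t) (Y i) \<le> d"
    by metis
  define h0 where "h0 = Min (\<delta>f ` {..<n})"
  have h00: "0 < h0" unfolding h0_def using n0 \<delta>f(1) by (subst Min_gr_iff) auto
  have h0le: "\<And>i. i < n \<Longrightarrow> h0 \<le> \<delta>f i" unfolding h0_def by (rule Min_le) auto
  obtain N :: nat where N: "S / h0 < real N" using reals_Archimedean2 by blast
  have "0 < S / h0" using S h00 by simp
  then have N0: "N > 0" using N by (cases N) auto
  define hh where "hh = S / real N"
  have hh0: "0 < hh" using S N0 by (simp add: hh_def)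
  have hhh0: "hh \<le> h0"
  proof -
    have "S < h0 * real N" using N h00 by (simp add: field_simps)
    then show ?thesis using N0 by (simp add: hh_def field_simps)
  qed
  have Nhh: "real N * hh = S" using N0 by (simp add: hh_def)
  define \<tau> where "\<tau> = \<theta> * hh / real n"
  define sl where "sl b = (1 - \<theta>) * hh * lam (b mod n)" for b
  have tau0: "0 < \<tau>" using th0 hh0 n0 by (simp add: \<tau>_def)
  have sl0: "\<And>b. 0 \<le> sl b" unfolding sl_def using th0 hh0 lam0 n0 by simp
  have slh: "\<And>b. sl b \<le> hh"
  proof -
    fix b
    have "lam (b mod n) \<le> 1" "0 \<le> lam (b mod n)" using lam1 lam0 n0 by auto
    then have "(1 - \<theta>) * lam (b mod n) \<le> 1" using th0
      by (intro mult_le_one) auto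
    then have "hh * ((1 - \<theta>) * lam (b mod n)) \<le> hh * 1" using hh0 by (intro mult_left_mono) auto
    then show "sl b \<le> hh" by (simp add: sl_def mult_ac)
  qed
  have dev: "\<And>b t. 0 \<le> t \<Longrightarrow> t \<le> sl b \<Longrightarrow> dist (Ys A B 0 (Y (b mod n)) (U (b mod n)) t) (Y (b mod n)) \<le> d"
  proof -
    fix b t assume t: "0 \<le> t" "t \<le> sl b"
    have "b mod n < n" using n0 by simp
    moreover have "t \<le> \<delta>f (b mod n)" using t slh[of b] hhh0 h0le[OF \<open>b mod n < n\<close>] by linarith
    ultimately show "dist (Ys A B 0 (Y (b mod n)) (U (b mod n)) t) (Y (b mod n)) \<le> d"
      using \<delta>f(2) t by blast
  qed
  obtain u y where blk: "good u" "sol_on A B 0 (\<Sum>b<N*n. \<tau> + sl b) u y" "y 0 = p"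
    "norm (integral {0..(\<Sum>b<N*n. \<tau> + sl b)} (\<lambda>t. g (u t) (y t) z) - (\<Sum>b<N*n. sl b *\<^sub>R g (U (b mod n)) (Y (b mod n)) z))
      \<le> (\<Sum>b<N*n. M * \<tau> + L * d * sl b)"
    using blocks[where \<beta>="\<lambda>b. b mod n" and U=U and Y=Y and K="N*n" and p=p and z=z and sl=sl and d=d and \<tau>=\<tau>, OF ctrb meas bnd lipy L0 tau0 sl0 dev] by blast
  have E0: "(\<Sum>b<N*n. sl b) = (1 - \<theta>) * S"
  proof -
    have "(\<Sum>b<N*n. sl b) = (\<Sum>b<N*n. (\<lambda>i. (1 - \<theta>) * hh * lam i) (b mod n))" by (simp add: sl_def)
    also have "\<dots> = (\<Sum>m<N. \<Sum>i<n. (1 - \<theta>) * hh * lam i)" by (rule sum_mod_group)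
    also have "\<dots> = real N * ((1 - \<theta>) * hh)" using lsum by (simp add: sum_distrib_left[symmetric])
    finally show ?thesis using Nhh by (simp add: algebra_simps)
  qed
  have Ntau: "real (N * n) * \<tau> = \<theta> * S" using n0 Nhh by (simp add: \<tau>_def field_simps)
  have E1: "(\<Sum>b<N*n. \<tau> + sl b) = S"
    using E0 Ntau by (simp add: sum.distrib algebra_simps)
  have E2: "(\<Sum>b<N*n. sl b *\<^sub>R g (U (b mod n)) (Y (b mod n)) z) = ((1 - \<theta>) * S) *\<^sub>R q"
  proof -
    have "(\<Sum>b<N*n. sl b *\<^sub>R g (U (b mod n)) (Y (b mod n)) z)
        = (\<Sum>b<N*n. (\<lambda>i. ((1 - \<theta>) * hh) *\<^sub>R (lam i *\<^sub>R gv i)) (b mod n))"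
      by (simp add: sl_def gv_def)
    also have "\<dots> = (\<Sum>m<N. \<Sum>i<n. ((1 - \<theta>) * hh) *\<^sub>R (lam i *\<^sub>R gv i))" by (rule sum_mod_group)
    also have "\<dots> = (\<Sum>m<N. ((1 - \<theta>) * hh) *\<^sub>R q)" by (rule sum.cong[OF refl], subst scaleR_sum_right[symmetric], simp only: qsum)
    also have "\<dots> = (real N * ((1 - \<theta>) * hh)) *\<^sub>R q" by (subst sum_constant_scaleR) simp
    finally show ?thesis using Nhh by (simp add: algebra_simps)
  qed
  have E3: "(\<Sum>b<N*n. M * \<tau> + L * d * sl b) = M * \<theta> * S + L * d * ((1 - \<theta>) * S)"
  proof -
    have "(\<Sum>b<N*n. M * \<tau> + L * d * sl b) = real (N * n) * (M * \<tau>) + L * d * (\<Sum>b<N*n. sl b)"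
      by (simp add: sum.distrib sum_distrib_left)
    also have "\<dots> = M * (real (N * n) * \<tau>) + L * d * ((1 - \<theta>) * S)"
      unfolding E0 by (simp only: mult_ac)
    also have "\<dots> = M * \<theta> * S + L * d * ((1 - \<theta>) * S)"
      unfolding Ntau by (simp only: mult_ac)
    finally show ?thesis .
  qed
  define I where "I = integral {0..S} (\<lambda>t. g (u t) (y t) z)"
  have sS: "sol_on A B 0 S u y" using blk(2) E1 by simp
  have bI: "norm (I - ((1 - \<theta>) * S) *\<^sub>R q) \<le> M * \<theta> * S + L * d * ((1 - \<theta>) * S)"
    using blk(4) unfolding E1 E2 E3 I_def .
  define v where "v = (1 / S) *\<^sub>R I"
  have vin: "v \<in> Vset A B g S p z" unfolding v_def I_def by (rule in_Vset[OF sS blk(1) blk(3)])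
  have "norm (I - S *\<^sub>R q) \<le> norm (I - ((1 - \<theta>) * S) *\<^sub>R q) + norm ((\<theta> * S) *\<^sub>R q)"
  proof -
    have "I - S *\<^sub>R q = (I - ((1 - \<theta>) * S) *\<^sub>R q) - (\<theta> * S) *\<^sub>R q" by (simp add: algebra_simps)
    then show ?thesis by (metis norm_triangle_ineq4)
  qed
  also have "norm ((\<theta> * S) *\<^sub>R q) \<le> \<theta> * S * M"
    using th0 S nq by (simp add: mult_left_mono)
  finally have "norm (I - S *\<^sub>R q) \<le> M * \<theta> * S + L * d * ((1 - \<theta>) * S) + \<theta> * S * M"
    using bI by linarith
  also have "\<dots> = S * (2 * M * \<theta> + L * d * (1 - \<theta>))" by (simp add: algebra_simps)
  also have "\<dots> \<le> S * (\<epsilon> / 4 + \<epsilon> / 4)"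
  proof -
    have "L * d * (1 - \<theta>) \<le> L * d" using th0 L0 d0 by (simp add: mult_left_le)
    then show ?thesis using th1 d1 S by (intro mult_left_mono) auto
  qed
  finally have nI: "norm (I - S *\<^sub>R q) \<le> S * (\<epsilon> / 2)" by simp
  have "dist v q = norm ((1 / S) *\<^sub>R (I - S *\<^sub>R q))"
    using S by (simp add: v_def dist_norm algebra_simps)
  also have "\<dots> = (1 / S) * norm (I - S *\<^sub>R q)" using S by simp
  also have "\<dots> \<le> (1 / S) * (S * (\<epsilon> / 2))" using nI S by (intro mult_left_mono) auto
  also have "\<dots> < \<epsilon>" using S e by simp
  finally show ?thesis using vin by blast
qed


theorem lemma2:
  fixes A :: "real^'m^'m" and B :: "real^'k^'m"
    and g :: "real^'k \<Rightarrow> real^'m \<Rightarrow> real^'n \<Rightarrow> real^'n"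
  assumes ctrb: "ctrb_rank A B = CARD('m)"
    and meas: "(\<lambda>(u, y, z). g u y z) \<in> borel_measurable borel"
    and bnd: "\<exists>Mg. \<forall>u y z. norm (g u y z) \<le> Mg"
    and lip: "\<exists>L. \<forall>u y z y' z'. dist (g u y z) (g u y' z') \<le> L * dist (y, z) (y', z')"
    and S: "S > 0"
  shows "closure (Vset A B g S y z) = closure (convex hull {g u y' z | u y'. True})"
proof -
  obtain M where bndM: "\<And>u y z. norm (g u y z) \<le> M" using bnd by blast
  obtain L1 where L1: "\<And>u y z y' z'. dist (g u y z) (g u y' z') \<le> L1 * dist (y, z) (y', z')"
    using lip by blast
  define L where "L = max L1 0"
  have L0: "0 \<le> L" by (simp add: L_def)
  have lipy: "dist (g u y1 z1) (g u y2 z1) \<le> L * dist y1 y2" for u y1 y2 z1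
  proof -
    have "dist (g u y1 z1) (g u y2 z1) \<le> L1 * dist (y1, z1) (y2, z1)" by (rule L1)
    also have "dist (y1, z1) (y2, z1) = dist y1 y2" by (simp add: dist_Pair_Pair)
    also have "L1 * dist y1 y2 \<le> L * dist y1 y2" by (simp add: L_def mult_right_mono)
    finally show ?thesis .
  qed
  have sub1: "Vset A B g S y z \<subseteq> closure (convex hull {g u y' z | u y'. True})"
    by (rule Vset_sub[OF meas bndM S])
  have sub2: "convex hull {g u y' z | u y'. True} \<subseteq> closure (Vset A B g S y z)"
  proof
    fix q assume q: "q \<in> convex hull {g u y' z | u y'. True}"
    show "q \<in> closure (Vset A B g S y z)" unfolding closure_approachable
      using approx[OF ctrb meas bndM lipy L0 S q] by blast
  qed
  show ?thesis
  proof
    show "closure (Vset A B g S y z) \<subseteq> closure (convex hull {g u y' z | u y'. True})"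
      by (rule closure_minimal[OF sub1 closed_closure])
    show "closure (convex hull {g u y' z | u y'. True}) \<subseteq> closure (Vset A B g S y z)"
      by (rule closure_minimal[OF sub2 closed_closure])
  qed
qed


end
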